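(* Let $\Omega\subset\mathbb{R}^2$ be the unit disc. Fix $r_1\in(0,1)$ and let $\sigma_1,\sigma_2>0$. If the Neumann-to-Dirichlet maps satisfy $R_{\sigma_1,r_1}=R_{\sigma_2,r_1}$ (as maps $H^{-1/2}(\partial\Omega)\to H^{1/2}(\partial\Omega)$), then $\sigma_1=\sigma_2$.
   Context: Polar coordinates $(r,\phi)$ on the unit disc; $I_n,K_n$ are the modified Bessel functions of first and second kind of order $n$; $g_n=(g,e^{in\phi})$. For $r_1\in(0,1)$, $\sigma>0$ and $g\in H^{-1/2}(\partial\Omega)$, let $\psi$ solve $\frac{1}{r}\partial_r(r\partial_r\psi)+\frac{1}{r^2}\partial_\phi^2\psi-\sigma^{-1}\psi=0$ for $0<r<r_1$; $\frac{1}{r}\partial_r(r\partial_r\psi)+\frac{1}{r^2}\partial_\phi^2\psi-\psi=0$ for $r_1<r<1$; $\psi|_{r=r_1}^+=\psi|_{r=r_1}^-$, $\partial_r\psi|_{r=r_1}^+=\sigma\,\partial_r\psi|_{r=r_1}^-$ ($\pm$ = limits from outside/inside $r=r_1$); $\partial_r\psi|_{r=1}=g$; $\psi$ bounded at $r=0$. The Neumann-to-Dirichlet map is $R_{\sigma,r_1}(g)=\psi|_{r=1}$. Explicitly, with $D(x,y)=I_n(x)K_n(y)-K_n(x)I_n(y)$ and $D_{r,s}=\partial_x^r\partial_y^sD$, $R_{\sigma,r_1}(g)=\sum_{n\in\mathbb{Z}}\frac{I_n(r_1/\sqrt{\sigma})D_{0,1}(1,r_1)-\sigma I_n'(r_1/\sqrt{\sigma})D(1,r_1)}{I_n(r_1/\sqrt{\sigma})D_{1,1}(1,r_1)-\sigma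 I_n'(r_1/\sqrt{\sigma})D_{1,0}(1,r_1)}g_ne^{in\phi}$. (This models the Schrödinger equation with piecewise constant potential $\widetilde U=\widetilde E+\sigma^{-1}$ in the core and $\widetilde E+1$ in the shell.) *)

theory Defs
  imports "HOL-Analysis.Analysis"
begin

definition besselI :: "int \<Rightarrow> real \<Rightarrow> real" where
  "besselI n x = (\<Sum>k. (x / 2) ^ (2 * k + nat \<bar>n\<bar>) / (fact k * fact (k + nat \<bar>n\<bar>)))"

definition besselK :: "int \<Rightarrow> real \<Rightarrow> real" where
  "besselK n x = integral {0..} (\<lambda>t. exp (- x * cosh t) * cosh (of_int n * t))"

definition Dfun :: "int \<Rightarrow> real \<Rightarrow> real \<Rightarrow> real" where
  "Dfun n x y = besselI n x * besselK n y - besselK n x * besselI n y"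

definition D01 :: "int \<Rightarrow> real \<Rightarrow> real \<Rightarrow> real" where
  "D01 n x y = besselI n x * deriv (besselK n) y - besselK n x * deriv (besselI n) y"

definition D10 :: "int \<Rightarrow> real \<Rightarrow> real \<Rightarrow> real" where
  "D10 n x y = deriv (besselI n) x * besselK n y - deriv (besselK n) x * besselI n y"

definition D11 :: "int \<Rightarrow> real \<Rightarrow> real \<Rightarrow> real" where
  "D11 n x y = deriv (besselI n) x * deriv (besselK n) y - deriv (besselK n) x * deriv (besselI n) y"

text \<open>Fourier multiplier of the Neumann-to-Dirichlet map R_{sigma,r1} at mode n.
  The factor I_n'(r1/sqrt sigma) is read as the r-derivative of r \<mapsto> I_n(r/sqrt sigma) at r1
  (this is what the transmission problem yields).\<close>
definition NtD_mult :: "real \<Rightarrow> real \<Rightarrow> int \<Rightarrow> real" where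
  "NtD_mult \<sigma> r1 n =
     (let a = besselI n (r1 / sqrt \<sigma>);
          b = \<sigma> * deriv (\<lambda>r. besselI n (r / sqrt \<sigma>)) r1
      in (a * D01 n 1 r1 - b * Dfun n 1 r1) / (a * D11 n 1 r1 - b * D10 n 1 r1))"

text \<open>H^{-1/2}(boundary of the unit disc), represented by Fourier coefficient sequences
  g_n = (g, e^{in phi}), n \<in> Z.\<close>
definition Hmhalf :: "(int \<Rightarrow> complex) set" where
  "Hmhalf = {g. (\<lambda>n::int. (1 + real_of_int n ^ 2) powr (-1/2) * (cmod (g n))\<^sup>2) summable_on UNIV}"

definition NtD :: "real \<Rightarrow> real \<Rightarrow> (int \<Rightarrow> complex) \<Rightarrow> (int \<Rightarrow> complex)" where
  "NtD \<sigma> r1 g = (\<lambda>n. complex_of_real (NtD_mult \<sigma> r1 n) * g n)"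

end

theory Submission
  imports Defs
begin

lemma pow_fact_le_exp:
  fixes x :: real assumes "0 \<le> x" shows "x ^ n / fact n \<le> exp x"
proof -
  have "(\<Sum>m\<in>{n}. x ^ m / fact m) \<le> (\<Sum>m. x ^ m / fact m)"
    using assms summable_exp_generic[of x]
    by (intro sum_le_suminf) (auto simp: divide_inverse ac_simps)
  then show ?thesis by (simp add: exp_def divide_inverse ac_simps)
qed

lemma cosh_pow_exp_bound:
  fixes a t :: real assumes a: "0 < a" and t: "0 \<le> t"
  shows "cosh t ^ k * exp (- a * cosh t) \<le> 2 * fact (k+1) / a^(k+1) * exp (- t)"
proof -
  define c where "c = cosh t"
  have c1: "exp t / 2 \<le> c" unfolding c_def cosh_def by simp
  have cpos: "0 < c" using c1 exp_gt_zero[of t] by linarith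
  have e: "(a*c)^(k+1) / fact (k+1) \<le> exp (a*c)"
    using pow_fact_le_exp[of "a*c" "k+1"] a cpos by simp
  have "c ^ k * exp (- a * c) = c^(k+1) / (c * exp (a*c))"
    using cpos by (simp add: exp_minus field_simps)
  also have "\<dots> \<le> c^(k+1) / (c * ((a*c)^(k+1) / fact (k+1)))"
    using e a cpos by (intro divide_left_mono mult_left_mono) (auto intro!: mult_pos_pos divide_pos_pos)
  also have "\<dots> = fact (k+1) / a^(k+1) / c"
    using a cpos by (simp add: power_mult_distrib field_simps)
  also have "\<dots> \<le> fact (k+1) / a^(k+1) / (exp t / 2)"
    using c1 a cpos by (intro divide_left_mono) auto
  also have "\<dots> = 2 * fact (k+1) / a^(k+1) * exp (- t)"
    by (simp add: exp_minus field_simps)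
  finally show ?thesis unfolding c_def .
qed




lemma lebesgue_atLeast0: "{0::real..} \<in> sets lebesgue" by simp

lemma coshpow_integrable:
  fixes a :: real assumes a: "0 < a"
  shows "(\<lambda>t. cosh t ^ k * exp (- a * cosh t)) integrable_on {0..}"
proof (rule measurable_bounded_by_integrable_imp_integrable_real)
  show "(\<lambda>t. cosh t ^ k * exp (- a * cosh t)) \<in> borel_measurable (lebesgue_on {0..})"
    by (intro continuous_imp_measurable_on_sets_lebesgue continuous_intros) simp
  have ie: "(\<lambda>t. exp (- 1 * t)) integrable_on {0::real..}"
    by (rule integrable_on_exp_minus_to_infinity) simp
  show "(\<lambda>t. 2 * fact (k+1) / a^(k+1) * exp (- t)) integrable_on {0..}"
    using integrable_on_cmult_left[OF ie, of "2*fact(k+1)/a^(k+1)"] by simp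
  show "\<bar>cosh t ^ k * exp (- a * cosh t)\<bar> \<le> 2 * fact (k+1) / a^(k+1) * exp (- t)" if "t \<in> {0..}" for t
    using cosh_pow_exp_bound[OF a, of t k] that by (simp add: abs_mult)
qed (rule lebesgue_atLeast0)

definition K1 :: "real \<Rightarrow> real" where
  "K1 x = integral {0..} (\<lambda>t. cosh t ^ 1 * exp (- x * cosh t))"

lemma besselK0_eq: "besselK 0 x = integral {0..} (\<lambda>t. cosh t ^ 0 * exp (- x * cosh t))"
  by (simp add: besselK_def)

lemma integral_coshpow_pos:
  fixes a :: real assumes a: "0 < a"
  shows "0 < integral {0..} (\<lambda>t. cosh t ^ k * exp (- a * cosh t))"
proof -
  let ?f = "\<lambda>t. cosh t ^ k * exp (- a * cosh t)"
  have ic: "?f integrable_on {0..1}"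
    by (intro integrable_continuous_real continuous_intros)
  have "integral {0..1::real} (\<lambda>t. exp (- a * cosh 1)) \<le> integral {0..1} ?f"
  proof (rule Henstock_Kurzweil_Integration.integral_le)
    show "(\<lambda>t. exp (- a * cosh 1)) integrable_on {0..1::real}" by (intro integrable_continuous_real continuous_intros)
    show "?f integrable_on {0..1}" by (rule ic)
    fix t :: real assume t: "t \<in> {0..1}"
    have c1: "1 \<le> cosh t" by (rule cosh_real_ge_1)
    have "cosh t \<le> cosh 1" using t by (simp add: cosh_real_nonneg_le_iff)
    then have "exp (- a * cosh 1) \<le> exp (- a * cosh t)" using a by simp
    also have "\<dots> \<le> cosh t ^ k * exp (- a * cosh t)"
      using c1 by (simp add: one_le_power)
    finally show "exp (- a * cosh 1) \<le> ?f t" .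
  qed
  also have "\<dots> \<le> integral {0..} ?f"
    using ic coshpow_integrable[OF a, of k] by (intro integral_subset_le) (auto intro!: mult_nonneg_nonneg)
  finally have "exp (- (a * cosh 1)) \<le> integral {0..} ?f" by simp
  then show ?thesis by (smt (verit) exp_gt_zero)
qed

lemma K1_antimono:
  assumes "0 < x" "x \<le> y" shows "K1 y \<le> K1 x"
  unfolding K1_def
proof (rule Henstock_Kurzweil_Integration.integral_le)
  show "(\<lambda>t. cosh t ^ 1 * exp (- y * cosh t)) integrable_on {0..}"
    using assms by (intro coshpow_integrable) simp
  show "(\<lambda>t. cosh t ^ 1 * exp (- x * cosh t)) integrable_on {0..}"
    using assms by (intro coshpow_integrable) simp
  fix t :: real
  have "0 < cosh t" by simp
  then show "cosh t ^ 1 * exp (- y * cosh t) \<le> cosh t ^ 1 * exp (- x * cosh t)"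
    using assms by (simp add: mult_right_mono)
qed


definition Fk :: "nat \<Rightarrow> real \<Rightarrow> real" where
  "Fk k a = integral {0..} (\<lambda>t. cosh t ^ k * exp (- a * cosh t))"

lemma Fk_has_integral: "0 < a \<Longrightarrow> ((\<lambda>t. cosh t ^ k * exp (- a * cosh t)) has_integral Fk k a) {0..}"
  unfolding Fk_def by (rule integrable_integral[OF coshpow_integrable])

lemma exp_taylor2_bound:
  fixes u :: real shows "\<bar>exp u - 1 - u\<bar> \<le> exp \<bar>u\<bar> / 2 * u^2"
proof -
  obtain s where s: "\<bar>s\<bar> \<le> \<bar>u\<bar>" "exp u = (\<Sum>m<2. u ^ m / fact m) + exp s / fact 2 * u ^ 2"
    using Maclaurin_exp_le[of u 2] by blast
  have e: "exp u - 1 - u = exp s / 2 * u^2" using s(2) by (simp add: numeral_2_eq_2)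
  have "exp s \<le> exp \<bar>u\<bar>" using s(1) by simp
  then have "exp s / 2 * u^2 \<le> exp \<bar>u\<bar> / 2 * u^2" by (intro mult_right_mono) auto
  then show ?thesis unfolding e by simp
qed

lemma pointwise_bound:
  fixes x h c :: real assumes x: "0 < x" and c: "0 < c" and h: "\<bar>h\<bar> \<le> x / 2"
  shows "\<bar>exp (- (x+h) * c) - exp (- x * c) + h * (c * exp (- x * c))\<bar> \<le> h^2 * (c^2 * exp (- (x/2) * c))"
proof -
  have eq: "exp (- (x+h) * c) - exp (- x * c) + h * (c * exp (- x * c)) = exp (- x * c) * (exp (- h * c) - 1 - (- h * c))"
    by (simp add: algebra_simps exp_add[symmetric])
  have "\<bar>exp (- h * c) - 1 - (- h * c)\<bar> \<le> exp \<bar>- h * c\<bar> / 2 * (- h * c)^2"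
    by (rule exp_taylor2_bound)
  also have "\<dots> \<le> exp (\<bar>h\<bar> * c) * (h^2 * c^2)"
    using c by (simp add: abs_mult power_mult_distrib)
  finally have b: "\<bar>exp (- h * c) - 1 - (- h * c)\<bar> \<le> exp (\<bar>h\<bar> * c) * (h^2 * c^2)" .
  have "\<bar>exp (- (x+h) * c) - exp (- x * c) + h * (c * exp (- x * c))\<bar> = exp (- x * c) * \<bar>exp (- h * c) - 1 - (- h * c)\<bar>"
    unfolding eq by (simp add: abs_mult)
  also have "\<dots> \<le> exp (- x * c) * (exp (\<bar>h\<bar> * c) * (h^2 * c^2))"
    using b by (intro mult_left_mono) auto
  also have "\<dots> = exp (- x * c + \<bar>h\<bar> * c) * (h^2 * c^2)"
    by (simp only: exp_add mult.assoc)
  also have "\<dots> \<le> exp (- (x/2) * c) * (h^2 * c^2)"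
    using h c by (intro mult_right_mono) (auto simp: mult_right_mono algebra_simps)
  finally show ?thesis by (simp add: algebra_simps)
qed

lemma besselK0_deriv:
  assumes x: "0 < x"
  shows "(besselK 0 has_real_derivative - Fk 1 x) (at x)"
proof -
  have K: "besselK 0 y = Fk 0 y" for y by (simp add: besselK_def Fk_def)
  define M where "M = Fk 2 (x/2)"
  have main: "\<bar>(Fk 0 (x+h) - Fk 0 x) / h - (- Fk 1 x)\<bar> \<le> \<bar>h\<bar> * M"
    if h0: "h \<noteq> 0" and hx: "\<bar>h\<bar> < x/2" for h
  proof -
    have xh: "0 < x + h" using hx by linarith
    have I: "((\<lambda>t. cosh t ^ 0 * exp (- (x+h) * cosh t) - cosh t ^ 0 * exp (- x * cosh t)
               + h * (cosh t ^ 1 * exp (- x * cosh t))) has_integral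
               (Fk 0 (x+h) - Fk 0 x + h * Fk 1 x)) {0..}"
      by (intro has_integral_add has_integral_diff has_integral_mult_right Fk_has_integral xh x)
    have I2: "((\<lambda>t. h^2 * (cosh t ^ 2 * exp (- (x/2) * cosh t))) has_integral (h^2 * M)) {0..}"
      unfolding M_def using x by (intro has_integral_mult_right Fk_has_integral) simp
    have "norm (integral {0..} (\<lambda>t. cosh t ^ 0 * exp (- (x+h) * cosh t) - cosh t ^ 0 * exp (- x * cosh t)
               + h * (cosh t ^ 1 * exp (- x * cosh t)))) \<le> integral {0..} (\<lambda>t. h^2 * (cosh t ^ 2 * exp (- (x/2) * cosh t)))"
    proof (rule integral_norm_bound_integral)
      show "(\<lambda>t. cosh t ^ 0 * exp (- (x+h) * cosh t) - cosh t ^ 0 * exp (- x * cosh t)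
               + h * (cosh t ^ 1 * exp (- x * cosh t))) integrable_on {0..}" using I by blast
      show "(\<lambda>t. h^2 * (cosh t ^ 2 * exp (- (x/2) * cosh t))) integrable_on {0..}" using I2 by blast
      fix t :: real
      show "norm (cosh t ^ 0 * exp (- (x+h) * cosh t) - cosh t ^ 0 * exp (- x * cosh t)
               + h * (cosh t ^ 1 * exp (- x * cosh t))) \<le> h^2 * (cosh t ^ 2 * exp (- (x/2) * cosh t))"
        using pointwise_bound[OF x cosh_real_pos[of t], of h] hx by simp
    qed
    then have n: "\<bar>Fk 0 (x+h) - Fk 0 x + h * Fk 1 x\<bar> \<le> h^2 * M"
      using integral_unique[OF I] integral_unique[OF I2] using h0 by simp
    have "\<bar>(Fk 0 (x+h) - Fk 0 x) / h - (- Fk 1 x)\<bar> = \<bar>Fk 0 (x+h) - Fk 0 x + h * Fk 1 x\<bar> / \<bar>h\<bar>"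
      using h0 by (simp add: field_simps abs_divide)
    also have "\<dots> \<le> h^2 * M / \<bar>h\<bar>"
      using n h0 by (simp add: divide_right_mono)
    also have "\<dots> = \<bar>h\<bar> * M" using h0 by (cases "h > 0") (auto simp: power2_eq_square field_simps)
    finally show ?thesis .
  qed
  have ev: "eventually (\<lambda>h. norm ((Fk 0 (x+h) - Fk 0 x) / h - (- Fk 1 x)) \<le> \<bar>h\<bar> * M) (at 0)"
    unfolding eventually_at
    by (rule exI[of _ "x/2"]) (use x main in \<open>auto simp: dist_norm\<close>)
  have "((\<lambda>h. \<bar>h\<bar> * M) \<longlongrightarrow> 0) (at (0::real))"
    by (rule tendsto_eq_intros) (auto intro!: tendsto_eq_intros)
  then have "((\<lambda>h. (Fk 0 (x+h) - Fk 0 x) / h - (- Fk 1 x)) \<longlongrightarrow> 0) (at 0)"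
    by (rule Lim_null_comparison[OF ev])
  then have "((\<lambda>h. (Fk 0 (x+h) - Fk 0 x) / h) \<longlongrightarrow> - Fk 1 x) (at 0)"
    using LIM_zero_iff[where f="\<lambda>h. (Fk 0 (x+h) - Fk 0 x) / h" and l="- Fk 1 x" and F="at 0"] by simp
  then show ?thesis unfolding DERIV_def K .
qed

lemma deriv_besselK0: "0 < x \<Longrightarrow> deriv (besselK 0) x = - Fk 1 x"
  by (rule DERIV_imp_deriv[OF besselK0_deriv])


definition cQ :: "nat \<Rightarrow> real" where "cQ n = 1 / (fact n)^2"
definition Q :: "real \<Rightarrow> real" where "Q w = (\<Sum>n. cQ n * w^n)"
definition P :: "real \<Rightarrow> real" where "P w = (\<Sum>n. diffs cQ n * w^n)"

lemma diffs_cQ: "diffs cQ n = cQ n / (n+1)"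
proof -
  have f: "fact (Suc n) = (real n + 1) * fact n" by simp
  have "diffs cQ n = (real n + 1) / ((real n + 1)^2 * (fact n)^2)"
    unfolding diffs_def cQ_def f by (simp add: power_mult_distrib)
  also have "\<dots> = 1 / ((real n + 1) * (fact n)^2)"
    by (simp add: power2_eq_square)
  finally show ?thesis by (simp add: cQ_def)
qed

lemma two_pow_sq: "(2::real)^k * 2^k = 4^k"
  by (simp add: power_mult_distrib[symmetric])

lemma cQ_pos: "0 < cQ n" by (simp add: cQ_def)
lemma cQ_le: "cQ n \<le> inverse (fact n)"
proof -
  have "1 \<le> (fact n :: real)" by simp
  then have "fact n \<le> (fact n :: real)^2" by (simp add: power2_eq_square)
  then show ?thesis unfolding cQ_def by (simp add: field_simps)
qed

lemma summable_Q: "summable (\<lambda>n. cQ n * y^n)"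
proof (rule summable_comparison_test'[OF summable_exp[of "\<bar>y\<bar>"]])
  fix n show "norm (cQ n * y^n) \<le> inverse (fact n) * \<bar>y\<bar>^n"
    using cQ_le[of n] cQ_pos[of n] by (simp add: abs_mult power_abs mult_right_mono)
qed

lemma summable_P: "summable (\<lambda>n. diffs cQ n * y^n)"
proof (rule summable_comparison_test'[OF summable_exp[of "\<bar>y\<bar>"]])
  fix n
  have "diffs cQ n \<le> cQ n" using cQ_pos[of n] by (simp add: diffs_cQ field_simps)
  moreover have "0 < diffs cQ n" using cQ_pos[of n] by (simp add: diffs_cQ)
  ultimately show "norm (diffs cQ n * y^n) \<le> inverse (fact n) * \<bar>y\<bar>^n"
    using cQ_le[of n] by (simp add: abs_mult power_abs mult_right_mono)
qed

lemma Q_deriv: "(Q has_real_derivative P w) (at w)"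
  unfolding Q_def P_def by (rule termdiffs_strong_converges_everywhere[OF summable_Q])

lemma Q_pos: "0 \<le> w \<Longrightarrow> 0 < Q w"
  unfolding Q_def by (rule suminf_pos2[of _ 0]) (auto intro: summable_Q simp: cQ_pos less_imp_le)

lemma P_pos: "0 \<le> w \<Longrightarrow> 0 < P w"
  unfolding P_def by (rule suminf_pos2[OF summable_P, of _ 0]) (auto simp: diffs_cQ cQ_pos less_imp_le)

lemma P_mono: "0 \<le> w1 \<Longrightarrow> w1 \<le> w2 \<Longrightarrow> P w1 \<le> P w2"
  unfolding P_def
  by (rule suminf_le[OF _ summable_P summable_P]) (auto intro!: mult_left_mono divide_right_mono power_mono simp: diffs_cQ cQ_pos less_imp_le)

lemma besselI0_eq: "besselI 0 x = Q (x^2/4)"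
proof -
  have "(x/2)^(2*k) / (fact k * fact k) = cQ k * (x^2/4)^k" for k
    by (simp add: cQ_def power_mult power2_eq_square power_divide two_pow_sq field_simps)
  then show ?thesis unfolding besselI_def Q_def by simp
qed

lemma besselI1_eq: "besselI 1 x = x/2 * P (x^2/4)"
proof -
  have e: "(\<lambda>k. (x/2)^(2*k + nat \<bar>1\<bar>) / (fact k * fact (k + nat \<bar>1\<bar>))) = (\<lambda>k. x/2 * (diffs cQ k * (x^2/4)^k))"
    by (rule ext) (simp add: diffs_cQ cQ_def power_mult power2_eq_square power_divide two_pow_sq field_simps)
  have "besselI 1 x = (\<Sum>k. x/2 * (diffs cQ k * (x^2/4)^k))" unfolding besselI_def e ..
  also have "\<dots> = x/2 * P (x^2/4)" unfolding P_def by (rule suminf_mult[OF summable_P])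
  finally show ?thesis .
qed

lemma besselI0_deriv: "(besselI 0 has_real_derivative besselI 1 x) (at x)"
proof -
  have "((\<lambda>x. Q (x^2/4)) has_real_derivative P (x^2/4) * (2 * x / 4)) (at x)"
    by (rule DERIV_chain2[OF Q_deriv]) (auto intro!: derivative_eq_intros)
  then show ?thesis unfolding besselI0_eq[abs_def] besselI1_eq by (simp add: field_simps)
qed


lemma summable_norm_Q: "summable (\<lambda>n. norm (cQ n * y^n))"
  using summable_Q[of "\<bar>y\<bar>"] cQ_pos by (simp add: abs_mult power_abs less_imp_le)

lemma summable_norm_P: "summable (\<lambda>n. norm (diffs cQ n * y^n))"
proof -
  have "norm (diffs cQ n * y^n) = diffs cQ n * \<bar>y\<bar>^n" for n
    using cQ_pos[of n] by (simp add: abs_mult power_abs diffs_cQ)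
  then show ?thesis using summable_P[of "\<bar>y\<bar>"] by simp
qed

lemma sign_lemma:
  fixes w1 w2 :: real assumes w: "0 \<le> w1" "w1 < w2"
  shows "0 \<le> (1/(real i+1) - 1/(real j+1)) * (w1^i * w2^j - w2^i * w1^j)"
proof -
  have main: "0 \<le> (1/(real i+1) - 1/(real j+1)) * (w1^i * w2^j - w2^i * w1^j)" if ij: "i \<le> j" for i j
  proof -
    obtain d where d: "j = i + d" using ij le_Suc_ex by blast
    have "w1^d \<le> w2^d" using w by (intro power_mono) auto
    then have "(w1*w2)^i * w1^d \<le> (w1*w2)^i * w2^d" using w by (intro mult_left_mono) auto
    then have a: "0 \<le> w1^i * w2^j - w2^i * w1^j" unfolding d by (simp add: power_add power_mult_distrib algebra_simps)
    have b: "0 \<le> 1/(real i+1) - 1/(real j+1)" using ij by (simp add: field_simps)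
    show ?thesis using a b by simp
  qed
  show ?thesis
  proof (cases "i \<le> j")
    case True then show ?thesis by (rule main)
  next
    case False
    then have "0 \<le> (1/(real j+1) - 1/(real i+1)) * (w1^j * w2^i - w2^j * w1^i)" by (intro main) simp
    then show ?thesis by (simp add: algebra_simps)
  qed
qed

lemma PQ_strict:
  fixes w1 w2 :: real assumes w: "0 \<le> w1" "w1 < w2"
  shows "P w2 * Q w1 < P w1 * Q w2"
proof -
  define p where "p = diffs cQ"
  define g where "g = (\<lambda>k i. p i * cQ (k - i) * (w1^i * w2^(k-i) - w2^i * w1^(k-i)))"
  have s1: "(\<lambda>k. \<Sum>i\<le>k. (p i * w1^i) * (cQ (k-i) * w2^(k-i))) sums (P w1 * Q w2)"
    unfolding P_def Q_def p_def by (rule Cauchy_product_sums[OF summable_norm_P summable_norm_Q])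
  have s2: "(\<lambda>k. \<Sum>i\<le>k. (p i * w2^i) * (cQ (k-i) * w1^(k-i))) sums (P w2 * Q w1)"
    unfolding P_def Q_def p_def by (rule Cauchy_product_sums[OF summable_norm_P summable_norm_Q])
  have eqk: "(\<Sum>i\<le>k. (p i * w1^i) * (cQ (k-i) * w2^(k-i))) - (\<Sum>i\<le>k. (p i * w2^i) * (cQ (k-i) * w1^(k-i)))
      = (\<Sum>i\<le>k. g k i)" for k
    unfolding g_def sum_subtractf[symmetric] by (rule sum.cong) (auto simp: algebra_simps)
  have s: "(\<lambda>k. \<Sum>i\<le>k. g k i) sums (P w1 * Q w2 - P w2 * Q w1)"
    using sums_diff[OF s1 s2] unfolding eqk .
  have nonneg: "0 \<le> (\<Sum>i\<le>k. g k i)" for k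
  proof -
    have rev: "(\<Sum>i\<le>k. g k i) = (\<Sum>i\<le>k. g k (k - i))"
      using sum.atLeastAtMost_rev[of "g k" 0 k] by (simp add: atLeast0AtMost)
    have "2 * (\<Sum>i\<le>k. g k i) = (\<Sum>i\<le>k. g k i + g k (k - i))"
      by (simp add: sum.distrib rev[symmetric])
    also have "\<dots> = (\<Sum>i\<le>k. cQ i * cQ (k-i) * ((1/(real i+1) - 1/(real (k-i)+1)) * (w1^i * w2^(k-i) - w2^i * w1^(k-i))))"
    proof (rule sum.cong)
      fix i assume "i \<in> {..k}"
      then have kk: "k - (k - i) = i" by simp
      show "g k i + g k (k - i) = cQ i * cQ (k-i) * ((1/(real i+1) - 1/(real (k-i)+1)) * (w1^i * w2^(k-i) - w2^i * w1^(k-i)))"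
        unfolding g_def kk p_def diffs_cQ by (simp add: field_simps)
    qed simp
    also have "0 \<le> \<dots>"
      by (intro sum_nonneg mult_nonneg_nonneg sign_lemma w less_imp_le cQ_pos)
    finally show ?thesis by simp
  qed
  have pos1: "0 < (\<Sum>i\<le>1. g 1 i)"
    using w by (simp add: g_def p_def diffs_cQ cQ_def field_simps)
  have "0 < P w1 * Q w2 - P w2 * Q w1"
    using suminf_pos2[OF sums_summable[OF s] nonneg pos1] sums_unique[OF s] by simp
  then show ?thesis by simp
qed


lemma deriv_besselI0: "deriv (besselI 0) y = besselI 1 y"
  by (rule DERIV_imp_deriv[OF besselI0_deriv])

lemma deriv_scaled:
  assumes s: "0 < \<sigma>"
  shows "deriv (\<lambda>r. besselI 0 (r / sqrt \<sigma>)) r1 = besselI 1 (r1 / sqrt \<sigma>) / sqrt \<sigma>"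
proof -
  have "((\<lambda>r. besselI 0 (r / sqrt \<sigma>)) has_real_derivative besselI 1 (r1 / sqrt \<sigma>) * (1 / sqrt \<sigma>)) (at r1)"
  proof -
    have "((\<lambda>r. r / sqrt \<sigma>) has_real_derivative 1 / sqrt \<sigma>) (at r1)"
      using DERIV_cdivide[OF DERIV_ident, where c="sqrt \<sigma>"] by simp
    from DERIV_chain2[OF besselI0_deriv this] show ?thesis by simp
  qed
  then show ?thesis by (simp add: DERIV_imp_deriv)
qed

lemma b_eq:
  assumes s: "0 < \<sigma>"
  shows "\<sigma> * deriv (\<lambda>r. besselI 0 (r / sqrt \<sigma>)) r1 = r1 / 2 * P (r1^2 / (4 * \<sigma>))"
proof -
  have sq: "(r1 / sqrt \<sigma>)^2 / 4 = r1^2 / (4 * \<sigma>)" using s by (simp add: power_divide)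
  have "\<sigma> / sqrt \<sigma> = sqrt \<sigma>" using s by (metis real_div_sqrt less_imp_le)
  then show ?thesis using s unfolding deriv_scaled[OF s] besselI1_eq sq
    by (simp add: field_simps)
qed

lemma a_eq:
  assumes s: "0 < \<sigma>"
  shows "besselI 0 (r1 / sqrt \<sigma>) = Q (r1^2 / (4 * \<sigma>))"
  using s by (simp add: besselI0_eq power_divide mult.commute)

lemma NtD_mult0:
  assumes s: "0 < \<sigma>"
  shows "NtD_mult \<sigma> r1 0 = (Q (r1^2 / (4 * \<sigma>)) * D01 0 1 r1 - r1 / 2 * P (r1^2 / (4 * \<sigma>)) * Dfun 0 1 r1)
     / (Q (r1^2 / (4 * \<sigma>)) * D11 0 1 r1 - r1 / 2 * P (r1^2 / (4 * \<sigma>)) * D10 0 1 r1)"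
  unfolding NtD_mult_def Let_def b_eq[OF s] a_eq[OF s, of r1] ..

lemma moebius_inj:
  fixes A B C E a1 a2 b1 b2 :: real
  assumes "0 < a1" "0 < a2" "0 \<le> b1" "0 \<le> b2" "C < 0" "0 < E" "A * E - B * C \<noteq> 0"
    and eq: "(a1 * A - b1 * B) / (a1 * C - b1 * E) = (a2 * A - b2 * B) / (a2 * C - b2 * E)"
  shows "a2 * b1 = a1 * b2"
proof -
  have d1: "a1 * C - b1 * E < 0" using assms by (smt (verit) mult_nonneg_nonneg mult_pos_neg)
  have d2: "a2 * C - b2 * E < 0" using assms by (smt (verit) mult_nonneg_nonneg mult_pos_neg)
  have "(a1 * A - b1 * B) * (a2 * C - b2 * E) = (a2 * A - b2 * B) * (a1 * C - b1 * E)"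
    using eq d1 d2 by (simp add: field_simps)
  then have "(a2 * b1 - a1 * b2) * (A * E - B * C) = 0" by (simp add: algebra_simps)
  then show ?thesis using assms(7) by simp
qed

lemma Fk_pos: "0 < a \<Longrightarrow> 0 < Fk k a"
  unfolding Fk_def by (rule integral_coshpow_pos)

lemma Fk1_antimono: "0 < x \<Longrightarrow> x \<le> y \<Longrightarrow> Fk 1 y \<le> Fk 1 x"
  using K1_antimono unfolding K1_def Fk_def by blast

lemma I0_pos: "0 < besselI 0 y"
  by (simp add: besselI0_eq Q_pos)

lemma I1_pos: "0 < y \<Longrightarrow> 0 < besselI 1 y"
  by (simp add: besselI1_eq P_pos)

lemma K_eq: "besselK 0 y = Fk 0 y" by (simp add: besselK_def Fk_def)

theorem main0:
  fixes r1 \<sigma>1 \<sigma>2 :: real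
  assumes r: "0 < r1" "r1 < 1" and s: "0 < \<sigma>1" "0 < \<sigma>2"
    and eq: "NtD_mult \<sigma>1 r1 0 = NtD_mult \<sigma>2 r1 0"
  shows "\<sigma>1 = \<sigma>2"
proof -
  define w1 where "w1 = r1^2 / (4 * \<sigma>1)"
  define w2 where "w2 = r1^2 / (4 * \<sigma>2)"
  have w: "0 \<le> w1" "0 \<le> w2" using s unfolding w1_def w2_def by auto
  have dI: "deriv (besselI 0) y = besselI 1 y" for y by (rule deriv_besselI0)
  have dK: "deriv (besselK 0) y = - Fk 1 y" if "0 < y" for y by (rule deriv_besselK0[OF that])
  have C: "D11 0 1 r1 = Fk 1 1 * besselI 1 r1 - besselI 1 1 * Fk 1 r1"
    unfolding D11_def dI dK[OF r(1)] dK[of 1, simplified] by simp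
  have E: "D10 0 1 r1 = besselI 1 1 * Fk 0 r1 + Fk 1 1 * besselI 0 r1"
    unfolding D10_def dI dK[of 1, simplified] K_eq by simp
  have A: "D01 0 1 r1 = - besselI 0 1 * Fk 1 r1 - Fk 0 1 * besselI 1 r1"
    unfolding D01_def dI dK[OF r(1)] K_eq by simp
  have B: "Dfun 0 1 r1 = besselI 0 1 * Fk 0 r1 - Fk 0 1 * besselI 0 r1"
    unfolding Dfun_def K_eq by simp
  have Delta: "D01 0 1 r1 * D10 0 1 r1 - Dfun 0 1 r1 * D11 0 1 r1
     = - (besselI 0 1 * Fk 1 1 + Fk 0 1 * besselI 1 1) * (besselI 0 r1 * Fk 1 r1 + Fk 0 r1 * besselI 1 r1)"
    unfolding A B C E by (simp add: algebra_simps)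
  have "0 < (besselI 0 1 * Fk 1 1 + Fk 0 1 * besselI 1 1) * (besselI 0 r1 * Fk 1 r1 + Fk 0 r1 * besselI 1 r1)"
    using r by (intro mult_pos_pos add_pos_pos I0_pos I1_pos Fk_pos) auto
  then have Dpos: "D01 0 1 r1 * D10 0 1 r1 - Dfun 0 1 r1 * D11 0 1 r1 < 0"
    unfolding Delta by linarith
  have I1lt: "besselI 1 r1 < besselI 1 1"
  proof -
    have "P (r1^2/4) \<le> P (1^2/4)" using r by (intro P_mono) (auto simp: power_le_one)
    have "0 < P (r1^2/4)" by (simp add: P_pos)
    have "r1 / 2 * P (r1^2/4) < 1/2 * P (r1^2/4)"
      using r \<open>0 < P (r1^2/4)\<close> by (intro mult_strict_right_mono) auto
    also have "\<dots> \<le> 1/2 * P (1^2/4)" using \<open>P (r1^2/4) \<le> P (1^2/4)\<close> by simp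
    finally have "r1 / 2 * P (r1^2/4) < 1/2 * P (1^2/4)" .
    then show ?thesis by (simp add: besselI1_eq)
  qed
  have Cneg: "D11 0 1 r1 < 0"
  proof -
    have "Fk 1 1 * besselI 1 r1 < Fk 1 1 * besselI 1 1"
      using I1lt Fk_pos[of 1 1] by simp
    also have "\<dots> \<le> Fk 1 r1 * besselI 1 1"
      using Fk1_antimono[of r1 1] r I1_pos[of 1] by (intro mult_right_mono) auto
    finally show ?thesis unfolding C by (simp add: mult.commute)
  qed
  have Epos: "0 < D10 0 1 r1"
    unfolding E using r by (intro add_pos_pos mult_pos_pos I0_pos I1_pos Fk_pos) auto
  have "Q w2 * (r1 / 2 * P w1) = Q w1 * (r1 / 2 * P w2)"
  proof (rule moebius_inj[where A="D01 0 1 r1" and B="Dfun 0 1 r1" and C="D11 0 1 r1" and E="D10 0 1 r1"])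
    show "0 < Q w1" "0 < Q w2" using w by (auto intro: Q_pos)
    show "0 \<le> r1 / 2 * P w1" "0 \<le> r1 / 2 * P w2" using w r P_pos[of w1] P_pos[of w2] by simp_all
    show "D11 0 1 r1 < 0" "0 < D10 0 1 r1" by (fact Cneg, fact Epos)
    show "D01 0 1 r1 * D10 0 1 r1 - Dfun 0 1 r1 * D11 0 1 r1 \<noteq> 0" using Dpos by simp
    show "(Q w1 * D01 0 1 r1 - r1 / 2 * P w1 * Dfun 0 1 r1) / (Q w1 * D11 0 1 r1 - r1 / 2 * P w1 * D10 0 1 r1) =
      (Q w2 * D01 0 1 r1 - r1 / 2 * P w2 * Dfun 0 1 r1) / (Q w2 * D11 0 1 r1 - r1 / 2 * P w2 * D10 0 1 r1)"
      using eq unfolding NtD_mult0[OF s(1)] NtD_mult0[OF s(2)] w1_def w2_def .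
  qed
  then have "r1/2 * (P w1 * Q w2) = r1/2 * (P w2 * Q w1)" by (simp only: ac_simps)
  then have PQ: "P w1 * Q w2 = P w2 * Q w1" using r by simp
  have "w1 = w2"
  proof (rule ccontr)
    assume "w1 \<noteq> w2"
    then consider "w1 < w2" | "w2 < w1" by linarith
    then show False
    proof cases
      case 1 then show False using PQ_strict[OF w(1) 1] PQ by linarith
    next
      case 2 then show False using PQ_strict[OF w(2) 2] PQ by linarith
    qed
  qed
  then have "r1^2 * (4 * \<sigma>2) = r1^2 * (4 * \<sigma>1)" using r s unfolding w1_def w2_def
    by (simp add: frac_eq_eq)
  then show ?thesis using r by simp
qed


lemma delta_in_Hmhalf: "(\<lambda>n::int. if n = 0 then (1::complex) else 0) \<in> Hmhalf"
proof -
  let ?f = "\<lambda>n::int. (1 + real_of_int n ^ 2) powr (-1/2) * (cmod (if n = 0 then (1::complex) else 0))\<^sup>2"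
  have "?f summable_on {0}" by simp
  then have "?f summable_on UNIV"
    by (rule summable_on_cong_neutral[THEN iffD1, rotated -1]) auto
  then show ?thesis unfolding Hmhalf_def by simp
qed

theorem theorem2p2:
  fixes r1 \<sigma>1 \<sigma>2 :: real
  assumes "0 < r1" and "r1 < 1" and "0 < \<sigma>1" and "0 < \<sigma>2"
    and "\<forall>g\<in>Hmhalf. NtD \<sigma>1 r1 g = NtD \<sigma>2 r1 g"
  shows "\<sigma>1 = \<sigma>2"
proof -
  let ?g = "\<lambda>n::int. if n = 0 then (1::complex) else 0"
  have "NtD \<sigma>1 r1 ?g = NtD \<sigma>2 r1 ?g" using assms(5) delta_in_Hmhalf by blast
  then have "NtD \<sigma>1 r1 ?g 0 = NtD \<sigma>2 r1 ?g 0" by simp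
  then have "NtD_mult \<sigma>1 r1 0 = NtD_mult \<sigma>2 r1 0" unfolding NtD_def by simp
  then show ?thesis using main0 assms(1-4) by blast
qed

end
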